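(* Let $\mathcal{R}$ be a left-connected rewriting system over a signature $\Sigma$, let $L_1$ and $L_2$ be the left-hand sides of two rules of $\mathcal{R}$, and let $(g_1,g_2\colon G\to L_1+L_2)$ be a gluing scheme yielding a pre-critical pair, with gluing $\epsilon\colon L_1+L_2\twoheadrightarrow S=\mathtt{coeq}(g_1,g_2)$ and interface $in(S)+out(S)\xrightarrow{[\subseteq,\subseteq]}S$. This pre-critical pair is a critical pair if and only if some hyperedge of $L_1$ is glued to some hyperedge of $L_2$.
   Context: A signature $\Sigma$ is a set of triples $(x,n,m)$ (label, arity, coarity). A $\Sigma$-hypergraph $G=(V,E,s,t,l)$ has finite sets $V$ (nodes), $E$ (hyperedges), maps $s,t\colon E\to V^*$ (lists of sources/targets) and a labelling $l\colon E\to\Sigma$ sending a hyperedge with $n$ sources and $m$ targets to some $(x,n,m)$. Morphisms preserve sources, targets and labels; they form the category $\mathbf{Hyp}_\Sigma$, where colimits are computed componentwise and monos/epis are injective/surjective on nodes and hyperedges. Composition is written $f;g$; $\iota_1,\iota_2$ are coprojections. A hypergraph is discrete if it has no hyperedges. A path is a list of hyperedges $[e_1,\dots,e_n]$ with some target of $e_k$ equal to a source of $e_{k+1}$ for each $k$; it goes from $v$ to $v'$ if $v$ is a source of $e_1$ and $v'$ a target of $e_n$; a cycle is a path with some source of $e_1$ a target of $e_n$. In-degree (out-degree) of a node $v$: number of pairs $(e,i)$ with $v$ the $i$-th target (source) of $e$; $in(H)$, $out(H)$: nodes of in-degree $0$, out-degree $0$. $H$ is ma (monogamous acyclic) if it has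 no cycle and all in- and out-degrees are $\le 1$. A cospan $I\to H\leftarrow O$ with $I,O$ discrete is an ma-cospan if $H$ is ma and the legs are mono with images $in(H)$ and $out(H)$. $H$ is strongly connected if for all $x\in in(H)$, $y\in out(H)$ there is a path from $x$ to $y$. A left-connected rule is a span $L\xleftarrow{[i_L,o_L]}K=I+O\xrightarrow{[i_R,o_R]}R$ with $I,O$ discrete, $I\to L\leftarrow O$ and $I\to R\leftarrow O$ ma-cospans, $[i_L,o_L]$ mono and $L$ strongly connected; a left-connected rewriting system is a finite set of such rules. A convex match is a mono $m\colon L\to G$ such that every path in $G$ between two nodes of $m(L)$ has all its hyperedges in $m(L)$. A derivation between ma-cospans $n\to G\leftarrow m$ and $n\to H\leftarrow m$ via a rule $L\leftarrow K\to R$ is given by a convex match $L\to G$, a hypergraph $C$ and a diagram $G\leftarrow C\to H$, $K\to C$, $R\to H$, $n+m\to C$ in which $K,L,C,G$ and $K,R,C,H$ are pushout squares (the left one a boundary complement, automatic for left-connected systems) and everything commutes with the interfaces; for left-connected systems mono matches are automatically convex and pushout complements exist uniquely. A pre-critical pair consists of two derivations, via rules $L_1\leftarrow K_1\to R_1$ and $L_2\leftarrow K_2\to R_2$ with pushout complements $C_1,C_2$, from a common ma-cospan $n\to S\leftarrow m$ with matches $m_1,m_2$ such that $[m_1,m_2]\colon L_1+L_2\to S$ is epi. It is parallel if there exist $g_1\colon L_1\to C_2$ and $g_2\colon L_2\to C_1$ with $g_1$ followed by $C_2\to S$ equal to $m_1$ and $g_2$ followed by $C_1\to S$ equal to $m_2$;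 it is a critical pair if it is not parallel. A gluing scheme for $L_1,L_2$ is a $\Sigma$-hypergraph $G$ with morphisms $g_1,g_2\colon G\to L_1+L_2$; its gluing is the coequaliser $\epsilon\colon L_1+L_2\to S=\mathtt{coeq}(g_1,g_2)$. Two nodes (or hyperedges) $x,x'$ of $L_1+L_2$ are glued if some node (hyperedge) $y$ of $G$ has $g_1(y)=x$, $g_2(y)=x'$. The gluing scheme yields a pre-critical pair if $\iota_1;\epsilon$ and $\iota_2;\epsilon$ are mono and $in(S)\xrightarrow{\subseteq}S\xleftarrow{\subseteq}out(S)$ is an ma-cospan; the pre-critical pair is then formed by the (unique) derivations from this ma-cospan with matches $\iota_1;\epsilon$ and $\iota_2;\epsilon$. *)

theory Defs
  imports Main
begin

(* Nodes and hyperedges are taken from nat (every finite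
   hypergraph is isomorphic to one of this form, and every notion below is
   invariant under isomorphism).  Labels have an arbitrary type 'x; a signature
   is a set of triples (label, arity, coarity). *)
record 'x hg =
  hV :: "nat set"
  hE :: "nat set"
  hs :: "nat \<Rightarrow> nat list"
  ht :: "nat \<Rightarrow> nat list"
  hl :: "nat \<Rightarrow> 'x"

type_synonym 'x signature = "('x \<times> nat \<times> nat) set"

definition hypergraph :: "'x signature \<Rightarrow> 'x hg \<Rightarrow> bool" where
  "hypergraph \<Sigma> G \<longleftrightarrow> finite (hV G) \<and> finite (hE G) \<and>
     (\<forall>e\<in>hE G. set (hs G e) \<subseteq> hV G \<and> set (ht G e) \<subseteq> hV G \<and>
        (hl G e, length (hs G e), length (ht G e)) \<in> \<Sigma>)"

(* a morphism is a pair (map on nodes, map on hyperedges) *)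
type_synonym hom = "(nat \<Rightarrow> nat) \<times> (nat \<Rightarrow> nat)"

definition is_hom :: "'x signature \<Rightarrow> 'x hg \<Rightarrow> 'x hg \<Rightarrow> hom \<Rightarrow> bool" where
  "is_hom \<Sigma> G H f \<longleftrightarrow> hypergraph \<Sigma> G \<and> hypergraph \<Sigma> H \<and>
     fst f ` hV G \<subseteq> hV H \<and> snd f ` hE G \<subseteq> hE H \<and>
     (\<forall>e\<in>hE G. hs H (snd f e) = map (fst f) (hs G e) \<and>
               ht H (snd f e) = map (fst f) (ht G e) \<and>
               hl H (snd f e) = hl G e)"

(* diagrammatic composition f;g *)
definition comp :: "hom \<Rightarrow> hom \<Rightarrow> hom" (infixl ";;" 70) where
  "f ;; g = (fst g \<circ> fst f, snd g \<circ> snd f)"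

definition hom_eq :: "'x hg \<Rightarrow> hom \<Rightarrow> hom \<Rightarrow> bool" where
  "hom_eq G f g \<longleftrightarrow> (\<forall>v\<in>hV G. fst f v = fst g v) \<and> (\<forall>e\<in>hE G. snd f e = snd g e)"

definition is_mono :: "'x signature \<Rightarrow> 'x hg \<Rightarrow> 'x hg \<Rightarrow> hom \<Rightarrow> bool" where
  "is_mono \<Sigma> G H f \<longleftrightarrow> is_hom \<Sigma> G H f \<and> inj_on (fst f) (hV G) \<and> inj_on (snd f) (hE G)"

definition is_epi :: "'x signature \<Rightarrow> 'x hg \<Rightarrow> 'x hg \<Rightarrow> hom \<Rightarrow> bool" where
  "is_epi \<Sigma> G H f \<longleftrightarrow> is_hom \<Sigma> G H f \<and> fst f ` hV G = hV H \<and> snd f ` hE G = hE H"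

definition is_coproduct ::
  "'x signature \<Rightarrow> 'x hg \<Rightarrow> 'x hg \<Rightarrow> 'x hg \<Rightarrow> hom \<Rightarrow> hom \<Rightarrow> bool" where
  "is_coproduct \<Sigma> A B P i1 i2 \<longleftrightarrow> is_hom \<Sigma> A P i1 \<and> is_hom \<Sigma> B P i2 \<and>
     (\<forall>X f g. is_hom \<Sigma> A X f \<and> is_hom \<Sigma> B X g \<longrightarrow>
        (\<exists>h. is_hom \<Sigma> P X h \<and> hom_eq A (i1 ;; h) f \<and> hom_eq B (i2 ;; h) g \<and>
           (\<forall>h'. is_hom \<Sigma> P X h' \<and> hom_eq A (i1 ;; h') f \<and> hom_eq B (i2 ;; h') g
                 \<longrightarrow> hom_eq P h h')))"

definition is_coequaliser ::
  "'x signature \<Rightarrow> 'x hg \<Rightarrow> 'x hg \<Rightarrow> hom \<Rightarrow> hom \<Rightarrow> 'x hg \<Rightarrow> hom \<Rightarrow> bool" where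
  "is_coequaliser \<Sigma> G A f1 f2 Q q \<longleftrightarrow> is_hom \<Sigma> G A f1 \<and> is_hom \<Sigma> G A f2 \<and>
     is_hom \<Sigma> A Q q \<and> hom_eq G (f1 ;; q) (f2 ;; q) \<and>
     (\<forall>X x. is_hom \<Sigma> A X x \<and> hom_eq G (f1 ;; x) (f2 ;; x) \<longrightarrow>
        (\<exists>h. is_hom \<Sigma> Q X h \<and> hom_eq A (q ;; h) x \<and>
           (\<forall>h'. is_hom \<Sigma> Q X h' \<and> hom_eq A (q ;; h') x \<longrightarrow> hom_eq Q h h')))"

definition is_pushout ::
  "'x signature \<Rightarrow> 'x hg \<Rightarrow> 'x hg \<Rightarrow> 'x hg \<Rightarrow> 'x hg \<Rightarrow> hom \<Rightarrow> hom \<Rightarrow> hom \<Rightarrow> hom \<Rightarrow> bool" where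
  "is_pushout \<Sigma> K B C P f g f' g' \<longleftrightarrow>
     is_hom \<Sigma> K B f \<and> is_hom \<Sigma> K C g \<and> is_hom \<Sigma> B P f' \<and> is_hom \<Sigma> C P g' \<and>
     hom_eq K (f ;; f') (g ;; g') \<and>
     (\<forall>X x y. is_hom \<Sigma> B X x \<and> is_hom \<Sigma> C X y \<and> hom_eq K (f ;; x) (g ;; y) \<longrightarrow>
        (\<exists>h. is_hom \<Sigma> P X h \<and> hom_eq B (f' ;; h) x \<and> hom_eq C (g' ;; h) y \<and>
           (\<forall>h'. is_hom \<Sigma> P X h' \<and> hom_eq B (f' ;; h') x \<and> hom_eq C (g' ;; h') y
                 \<longrightarrow> hom_eq P h h')))"

definition discrete :: "'x hg \<Rightarrow> bool" where
  "discrete G \<longleftrightarrow> hE G = {}"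

definition is_path :: "'x hg \<Rightarrow> nat list \<Rightarrow> bool" where
  "is_path G p \<longleftrightarrow> set p \<subseteq> hE G \<and>
     (\<forall>k. Suc k < length p \<longrightarrow> set (ht G (p ! k)) \<inter> set (hs G (p ! Suc k)) \<noteq> {})"

definition path_from_to :: "'x hg \<Rightarrow> nat list \<Rightarrow> nat \<Rightarrow> nat \<Rightarrow> bool" where
  "path_from_to G p v v' \<longleftrightarrow> is_path G p \<and> p \<noteq> [] \<and>
     v \<in> set (hs G (hd p)) \<and> v' \<in> set (ht G (last p))"

definition is_cycle :: "'x hg \<Rightarrow> nat list \<Rightarrow> bool" where
  "is_cycle G p \<longleftrightarrow> is_path G p \<and> p \<noteq> [] \<and>
     set (hs G (hd p)) \<inter> set (ht G (last p)) \<noteq> {}"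

definition in_degree :: "'x hg \<Rightarrow> nat \<Rightarrow> nat" where
  "in_degree G v = card {(e, i). e \<in> hE G \<and> i < length (ht G e) \<and> ht G e ! i = v}"

definition out_degree :: "'x hg \<Rightarrow> nat \<Rightarrow> nat" where
  "out_degree G v = card {(e, i). e \<in> hE G \<and> i < length (hs G e) \<and> hs G e ! i = v}"

definition in_nodes :: "'x hg \<Rightarrow> nat set" where
  "in_nodes G = {v \<in> hV G. in_degree G v = 0}"

definition out_nodes :: "'x hg \<Rightarrow> nat set" where
  "out_nodes G = {v \<in> hV G. out_degree G v = 0}"

definition is_ma :: "'x hg \<Rightarrow> bool" where
  "is_ma G \<longleftrightarrow> (\<nexists>p. is_cycle G p) \<and>
     (\<forall>v\<in>hV G. in_degree G v \<le> 1 \<and> out_degree G v \<le> 1)"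

definition ma_cospan :: "'x signature \<Rightarrow> 'x hg \<Rightarrow> 'x hg \<Rightarrow> 'x hg \<Rightarrow> hom \<Rightarrow> hom \<Rightarrow> bool" where
  "ma_cospan \<Sigma> I H J a b \<longleftrightarrow> discrete I \<and> discrete J \<and> is_ma H \<and>
     is_mono \<Sigma> I H a \<and> is_mono \<Sigma> J H b \<and>
     fst a ` hV I = in_nodes H \<and> fst b ` hV J = out_nodes H"

definition strongly_connected :: "'x hg \<Rightarrow> bool" where
  "strongly_connected H \<longleftrightarrow>
     (\<forall>x\<in>in_nodes H. \<forall>y\<in>out_nodes H. \<exists>p. path_from_to H p x y)"

(* A rule  L <-kL- K -kR-> R  with K = I + O (coprojections jI, jO);
   i_L = jI;kL, o_L = jO;kL, i_R = jI;kR, o_R = jO;kR. *)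
record 'x rule =
  rI :: "'x hg"
  rO :: "'x hg"
  rK :: "'x hg"
  rjI :: hom
  rjO :: hom
  rL :: "'x hg"
  rkL :: hom
  rR :: "'x hg"
  rkR :: hom

definition left_connected_rule :: "'x signature \<Rightarrow> 'x rule \<Rightarrow> bool" where
  "left_connected_rule \<Sigma> \<rho> \<longleftrightarrow>
     discrete (rI \<rho>) \<and> discrete (rO \<rho>) \<and>
     is_coproduct \<Sigma> (rI \<rho>) (rO \<rho>) (rK \<rho>) (rjI \<rho>) (rjO \<rho>) \<and>
     is_hom \<Sigma> (rK \<rho>) (rL \<rho>) (rkL \<rho>) \<and> is_hom \<Sigma> (rK \<rho>) (rR \<rho>) (rkR \<rho>) \<and>
     ma_cospan \<Sigma> (rI \<rho>) (rL \<rho>) (rO \<rho>) (rjI \<rho> ;; rkL \<rho>) (rjO \<rho> ;; rkL \<rho>) \<and>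
     ma_cospan \<Sigma> (rI \<rho>) (rR \<rho>) (rO \<rho>) (rjI \<rho> ;; rkR \<rho>) (rjO \<rho> ;; rkR \<rho>) \<and>
     is_mono \<Sigma> (rK \<rho>) (rL \<rho>) (rkL \<rho>) \<and>
     strongly_connected (rL \<rho>)"

definition left_connected_system :: "'x signature \<Rightarrow> 'x rule set \<Rightarrow> bool" where
  "left_connected_system \<Sigma> \<R> \<longleftrightarrow> finite \<R> \<and> (\<forall>\<rho>\<in>\<R>. left_connected_rule \<Sigma> \<rho>)"

definition convex_match :: "'x signature \<Rightarrow> 'x hg \<Rightarrow> 'x hg \<Rightarrow> hom \<Rightarrow> bool" where
  "convex_match \<Sigma> L G m \<longleftrightarrow> is_mono \<Sigma> L G m \<and>
     (\<forall>p v v'. v \<in> fst m ` hV L \<and> v' \<in> fst m ` hV L \<and> path_from_to G p v v'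
        \<longrightarrow> set p \<subseteq> snd m ` hE L)"

(* A derivation between the ma-cospans  N -aG-> G <-bG- M  and  N -aH-> H <-bH- M
   via rule rho, with match m : L \<rightarrow> G, pushout complement C and c : C \<rightarrow> G. *)
definition derivation ::
  "'x signature \<Rightarrow> 'x rule \<Rightarrow> 'x hg \<Rightarrow> 'x hg \<Rightarrow> 'x hg \<Rightarrow> hom \<Rightarrow> hom \<Rightarrow>
   'x hg \<Rightarrow> hom \<Rightarrow> hom \<Rightarrow> hom \<Rightarrow> 'x hg \<Rightarrow> hom \<Rightarrow> bool" where
  "derivation \<Sigma> \<rho> N M G aG bG H aH bH m C c \<longleftrightarrow>
     ma_cospan \<Sigma> N G M aG bG \<and> ma_cospan \<Sigma> N H M aH bH \<and>
     convex_match \<Sigma> (rL \<rho>) G m \<and>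
     (\<exists>k h r NM qN qM d.
        is_pushout \<Sigma> (rK \<rho>) (rL \<rho>) C G (rkL \<rho>) k m c \<and>
        is_pushout \<Sigma> (rK \<rho>) (rR \<rho>) C H (rkR \<rho>) k r h \<and>
        is_coproduct \<Sigma> N M NM qN qM \<and> is_hom \<Sigma> NM C d \<and>
        hom_eq N (qN ;; d ;; c) aG \<and> hom_eq M (qM ;; d ;; c) bG \<and>
        hom_eq N (qN ;; d ;; h) aH \<and> hom_eq M (qM ;; d ;; h) bH)"

definition discrete_on :: "nat set \<Rightarrow> 'x hg \<Rightarrow> 'x hg" where
  "discrete_on X G = \<lparr>hV = X, hE = {}, hs = hs G, ht = ht G, hl = hl G\<rparr>"

definition incl :: hom where
  "incl = (id, id)"

definition parallel ::
  "'x signature \<Rightarrow> 'x hg \<Rightarrow> hom \<Rightarrow> 'x hg \<Rightarrow> hom \<Rightarrow> 'x hg \<Rightarrow> hom \<Rightarrow> 'x hg \<Rightarrow> hom \<Rightarrow> bool" where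
  "parallel \<Sigma> L1 m1 C1 c1 L2 m2 C2 c2 \<longleftrightarrow>
     (\<exists>h1. is_hom \<Sigma> L1 C2 h1 \<and> hom_eq L1 (h1 ;; c2) m1) \<and>
     (\<exists>h2. is_hom \<Sigma> L2 C1 h2 \<and> hom_eq L2 (h2 ;; c1) m2)"

definition glued_edge :: "'x hg \<Rightarrow> hom \<Rightarrow> hom \<Rightarrow> nat \<Rightarrow> nat \<Rightarrow> bool" where
  "glued_edge G g1 g2 x x' \<longleftrightarrow> (\<exists>y\<in>hE G. snd g1 y = x \<and> snd g2 y = x')"

end

theory Submission
  imports Defs
begin


lemma hom_comp:
  assumes "is_hom \<Sigma> A B f" "is_hom \<Sigma> B C g"
  shows "is_hom \<Sigma> A C (f ;; g)"
  using assms unfolding is_hom_def comp_def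
  by (auto simp: image_subset_iff)

definition dbl :: "'x hg \<Rightarrow> nat set \<Rightarrow> nat set \<Rightarrow> 'x hg" where
 "dbl S A B = \<lparr>hV = (\<lambda>v. 2*v) ` hV S \<union> (\<lambda>v. 2*v+1) ` hV S,
    hE = (\<lambda>e. 2*e) ` hE S \<union> (\<lambda>e. 2*e+1) ` hE S,
    hs = (\<lambda>n. if even n then map (\<lambda>v. 2*v) (hs S (n div 2))
              else map (\<lambda>v. if v \<in> B then 2*v else 2*v+1) (hs S (n div 2))),
    ht = (\<lambda>n. if even n then map (\<lambda>v. 2*v) (ht S (n div 2))
              else map (\<lambda>v. if v \<in> B then 2*v else 2*v+1) (ht S (n div 2))),
    hl = (\<lambda>n. hl S (n div 2))\<rparr>"

lemma dbl_hg:
  assumes "hypergraph \<Sigma> S"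
  shows "hypergraph \<Sigma> (dbl S A B)"
proof -
  have *: "set (hs S e) \<subseteq> hV S \<and> set (ht S e) \<subseteq> hV S \<and>
        (hl S e, length (hs S e), length (ht S e)) \<in> \<Sigma>" if "e \<in> hE S" for e
    using assms that unfolding hypergraph_def by blast
  show ?thesis using assms unfolding hypergraph_def dbl_def
    apply (simp add: image_subset_iff)
    apply (intro conjI ballI)
    apply (auto dest!: * simp: subset_iff)
    done
qed

lemma jointly_surj:
  assumes hg: "hypergraph \<Sigma> S"
    and src: "\<forall>e\<in>A \<inter> hE S. set (hs S e) \<subseteq> B \<and> set (ht S e) \<subseteq> B"
    and uniq: "\<forall>X h h'. is_hom \<Sigma> S X h \<and> is_hom \<Sigma> S X h' \<and>
        (\<forall>v\<in>B \<inter> hV S. fst h v = fst h' v) \<and> (\<forall>e\<in>A \<inter> hE S. snd h e = snd h' e) \<longrightarrow> hom_eq S h h'"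
  shows "hE S \<subseteq> A \<and> hV S \<subseteq> B"
proof -
  let ?X = "dbl S A B"
  let ?h = "(\<lambda>v::nat. 2*v, \<lambda>e::nat. 2*e)"
  let ?h' = "(\<lambda>v::nat. if v \<in> B then 2*v else 2*v+1, \<lambda>e::nat. if e \<in> A then 2*e else 2*e+1)"
  have X: "hypergraph \<Sigma> ?X" by (rule dbl_hg[OF hg])
  have h: "is_hom \<Sigma> S ?X ?h" using hg X unfolding is_hom_def
    by (auto simp: dbl_def)
  have map1: "map (\<lambda>v. if v \<in> B then 2*v else 2*v+1) xs = map (\<lambda>v. 2*v) xs" if "set xs \<subseteq> B" for xs
    using that by (induction xs) auto
  have h': "is_hom \<Sigma> S ?X ?h'" using hg X src unfolding is_hom_def
    apply (simp add: dbl_def)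
    apply (intro conjI)
    apply (auto simp: map1)
    done
  have "hom_eq S ?h ?h'" using uniq h h' by auto
  then show ?thesis unfolding hom_eq_def
    by (auto split: if_splits)
qed

definition bq :: "nat set \<Rightarrow> (nat \<Rightarrow> 'x \<times> nat \<times> nat) \<Rightarrow> 'x hg" where
  "bq A f = \<lparr>hV = {0}, hE = A, hs = (\<lambda>e. replicate (fst (snd (f e))) 0),
     ht = (\<lambda>e. replicate (snd (snd (f e))) 0), hl = (\<lambda>e. fst (f e))\<rparr>"

lemma bq_hom:
  assumes "hypergraph \<Sigma> G" "finite A" "f ` A \<subseteq> \<Sigma>" "\<phi> ` hE G \<subseteq> A"
    "\<forall>e\<in>hE G. f (\<phi> e) = (hl G e, length (hs G e), length (ht G e))"
  shows "is_hom \<Sigma> G (bq A f) (\<lambda>_. 0, \<phi>)"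
proof -
  have "hypergraph \<Sigma> (bq A f)" using assms(2,3) unfolding hypergraph_def bq_def
    by (auto simp: image_subset_iff)
  moreover have "hV G \<noteq> {} \<or> True" by simp
  ultimately show ?thesis using assms unfolding is_hom_def
    by (auto simp: bq_def map_replicate_const image_subset_iff)
qed

definition triple :: "'x hg \<Rightarrow> nat \<Rightarrow> 'x \<times> nat \<times> nat" where
  "triple G e = (hl G e, length (hs G e), length (ht G e))"

lemma triple_in: "hypergraph \<Sigma> G \<Longrightarrow> e \<in> hE G \<Longrightarrow> triple G e \<in> \<Sigma>"
  unfolding hypergraph_def triple_def by blast

lemma hom_hg1: "is_hom \<Sigma> A B f \<Longrightarrow> hypergraph \<Sigma> A" unfolding is_hom_def by blast
lemma hom_hg2: "is_hom \<Sigma> A B f \<Longrightarrow> hypergraph \<Sigma> B" unfolding is_hom_def by blast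
lemma hom_V: "is_hom \<Sigma> A B f \<Longrightarrow> v \<in> hV A \<Longrightarrow> fst f v \<in> hV B" unfolding is_hom_def by blast
lemma hom_E: "is_hom \<Sigma> A B f \<Longrightarrow> e \<in> hE A \<Longrightarrow> snd f e \<in> hE B" unfolding is_hom_def by blast
lemma hom_s: "is_hom \<Sigma> A B f \<Longrightarrow> e \<in> hE A \<Longrightarrow> hs B (snd f e) = map (fst f) (hs A e)"
  unfolding is_hom_def by blast
lemma hom_t: "is_hom \<Sigma> A B f \<Longrightarrow> e \<in> hE A \<Longrightarrow> ht B (snd f e) = map (fst f) (ht A e)"
  unfolding is_hom_def by blast
lemma hom_l: "is_hom \<Sigma> A B f \<Longrightarrow> e \<in> hE A \<Longrightarrow> hl B (snd f e) = hl A e"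
  unfolding is_hom_def by blast
lemma hg_s: "hypergraph \<Sigma> A \<Longrightarrow> e \<in> hE A \<Longrightarrow> set (hs A e) \<subseteq> hV A"
  unfolding hypergraph_def by blast
lemma hg_t: "hypergraph \<Sigma> A \<Longrightarrow> e \<in> hE A \<Longrightarrow> set (ht A e) \<subseteq> hV A"
  unfolding hypergraph_def by blast

lemma coprod_surj:
  assumes cp: "is_coproduct \<Sigma> A B P i1 i2"
  shows "hE P \<subseteq> snd i1 ` hE A \<union> snd i2 ` hE B \<and> hV P \<subseteq> fst i1 ` hV A \<union> fst i2 ` hV B"
proof (rule jointly_surj)
  have h1: "is_hom \<Sigma> A P i1" and h2: "is_hom \<Sigma> B P i2" using cp unfolding is_coproduct_def by auto
  show "hypergraph \<Sigma> P" using h1 by (rule hom_hg2)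
  show "\<forall>e\<in>(snd i1 ` hE A \<union> snd i2 ` hE B) \<inter> hE P.
      set (hs P e) \<subseteq> fst i1 ` hV A \<union> fst i2 ` hV B \<and> set (ht P e) \<subseteq> fst i1 ` hV A \<union> fst i2 ` hV B"
  proof
    fix e assume "e \<in> (snd i1 ` hE A \<union> snd i2 ` hE B) \<inter> hE P"
    then consider a where "a \<in> hE A" "e = snd i1 a" | b where "b \<in> hE B" "e = snd i2 b" by auto
    then show "set (hs P e) \<subseteq> fst i1 ` hV A \<union> fst i2 ` hV B \<and> set (ht P e) \<subseteq> fst i1 ` hV A \<union> fst i2 ` hV B"
    proof cases
      case 1 then show ?thesis using hom_s[OF h1 1(1)] hom_t[OF h1 1(1)]
          hg_s[OF hom_hg1[OF h1] 1(1)] hg_t[OF hom_hg1[OF h1] 1(1)] by auto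
    next
      case 2 then show ?thesis using hom_s[OF h2 2(1)] hom_t[OF h2 2(1)]
          hg_s[OF hom_hg1[OF h2] 2(1)] hg_t[OF hom_hg1[OF h2] 2(1)] by auto
    qed
  qed
  show "\<forall>X h h'. is_hom \<Sigma> P X h \<and> is_hom \<Sigma> P X h' \<and>
        (\<forall>v\<in>(fst i1 ` hV A \<union> fst i2 ` hV B) \<inter> hV P. fst h v = fst h' v) \<and>
        (\<forall>e\<in>(snd i1 ` hE A \<union> snd i2 ` hE B) \<inter> hE P. snd h e = snd h' e) \<longrightarrow> hom_eq P h h'"
  proof (intro allI impI, elim conjE)
    fix X h h'
    assume hh: "is_hom \<Sigma> P X h" and hh': "is_hom \<Sigma> P X h'"
      and av: "\<forall>v\<in>(fst i1 ` hV A \<union> fst i2 ` hV B) \<inter> hV P. fst h v = fst h' v"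
      and ae: "\<forall>e\<in>(snd i1 ` hE A \<union> snd i2 ` hE B) \<inter> hE P. snd h e = snd h' e"
    have f: "is_hom \<Sigma> A X (i1 ;; h)" by (rule hom_comp[OF h1 hh])
    have g: "is_hom \<Sigma> B X (i2 ;; h)" by (rule hom_comp[OF h2 hh])
    obtain h0 where u: "\<forall>h''. is_hom \<Sigma> P X h'' \<and> hom_eq A (i1 ;; h'') (i1 ;; h) \<and> hom_eq B (i2 ;; h'') (i2 ;; h)
                 \<longrightarrow> hom_eq P h0 h''"
      using cp f g unfolding is_coproduct_def by blast
    have "hom_eq P h0 h" apply (rule u[rule_format]) using hh unfolding hom_eq_def by auto
    moreover have "hom_eq P h0 h'" apply (rule u[rule_format])
      using hh' av ae hom_V[OF h1] hom_V[OF h2] hom_E[OF h1] hom_E[OF h2]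
      unfolding hom_eq_def comp_def by auto
    ultimately show "hom_eq P h h'" unfolding hom_eq_def by auto
  qed
qed

lemma coprod_disj:
  assumes cp: "is_coproduct \<Sigma> A B P i1 i2" and a: "a \<in> hE A" and b: "b \<in> hE B"
  shows "snd i1 a \<noteq> snd i2 b"
proof -
  have h1: "is_hom \<Sigma> A P i1" and h2: "is_hom \<Sigma> B P i2" using cp unfolding is_coproduct_def by auto
  have hA: "hypergraph \<Sigma> A" and hB: "hypergraph \<Sigma> B" using hom_hg1[OF h1] hom_hg1[OF h2] by auto
  let ?E = "(\<lambda>e. 2*e) ` hE A \<union> (\<lambda>e. 2*e+1) ` hE B"
  let ?f = "\<lambda>n. if even n then triple A (n div 2) else triple B (n div 2)"
  have fin: "finite ?E" using hA hB unfolding hypergraph_def by auto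
  have fS: "?f ` ?E \<subseteq> \<Sigma>" using triple_in[OF hA] triple_in[OF hB] by auto
  have x: "is_hom \<Sigma> A (bq ?E ?f) (\<lambda>_. 0, \<lambda>e. 2*e)"
    by (rule bq_hom[OF hA fin fS]) (auto simp: triple_def)
  have y: "is_hom \<Sigma> B (bq ?E ?f) (\<lambda>_. 0, \<lambda>e. 2*e+1)"
    by (rule bq_hom[OF hB fin fS]) (auto simp: triple_def)
  obtain h where "hom_eq A (i1 ;; h) (\<lambda>_. 0, \<lambda>e. 2*e)" "hom_eq B (i2 ;; h) (\<lambda>_. 0, \<lambda>e. 2*e+1)"
    using cp x y unfolding is_coproduct_def by blast
  then have "snd h (snd i1 a) = 2*a" "snd h (snd i2 b) = 2*b+1" using a b unfolding hom_eq_def comp_def by auto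
  then show ?thesis by (metis even_Suc even_mult_iff even_numeral Suc_eq_plus1)
qed

lemma coprod_discrete:
  assumes "is_coproduct \<Sigma> A B P i1 i2" "discrete A" "discrete B"
  shows "hE P = {}"
  using coprod_surj[OF assms(1)] assms(2,3) unfolding discrete_def by auto

lemma pushout_surj:
  assumes po: "is_pushout \<Sigma> K L C S f g m c"
  shows "hE S \<subseteq> snd m ` hE L \<union> snd c ` hE C \<and> hV S \<subseteq> fst m ` hV L \<union> fst c ` hV C"
proof (rule jointly_surj)
  have h1: "is_hom \<Sigma> L S m" and h2: "is_hom \<Sigma> C S c" and hf: "is_hom \<Sigma> K L f" and hg: "is_hom \<Sigma> K C g"
    and cm: "hom_eq K (f ;; m) (g ;; c)" using po unfolding is_pushout_def by auto
  show "hypergraph \<Sigma> S" using h1 by (rule hom_hg2)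
  show "\<forall>e\<in>(snd m ` hE L \<union> snd c ` hE C) \<inter> hE S.
      set (hs S e) \<subseteq> fst m ` hV L \<union> fst c ` hV C \<and> set (ht S e) \<subseteq> fst m ` hV L \<union> fst c ` hV C"
  proof
    fix e assume "e \<in> (snd m ` hE L \<union> snd c ` hE C) \<inter> hE S"
    then consider a where "a \<in> hE L" "e = snd m a" | b where "b \<in> hE C" "e = snd c b" by auto
    then show "set (hs S e) \<subseteq> fst m ` hV L \<union> fst c ` hV C \<and> set (ht S e) \<subseteq> fst m ` hV L \<union> fst c ` hV C"
    proof cases
      case 1 then show ?thesis using hom_s[OF h1 1(1)] hom_t[OF h1 1(1)]
          hg_s[OF hom_hg1[OF h1] 1(1)] hg_t[OF hom_hg1[OF h1] 1(1)] by auto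
    next
      case 2 then show ?thesis using hom_s[OF h2 2(1)] hom_t[OF h2 2(1)]
          hg_s[OF hom_hg1[OF h2] 2(1)] hg_t[OF hom_hg1[OF h2] 2(1)] by auto
    qed
  qed
  show "\<forall>X h h'. is_hom \<Sigma> S X h \<and> is_hom \<Sigma> S X h' \<and>
        (\<forall>v\<in>(fst m ` hV L \<union> fst c ` hV C) \<inter> hV S. fst h v = fst h' v) \<and>
        (\<forall>e\<in>(snd m ` hE L \<union> snd c ` hE C) \<inter> hE S. snd h e = snd h' e) \<longrightarrow> hom_eq S h h'"
  proof (intro allI impI, elim conjE)
    fix X h h'
    assume hh: "is_hom \<Sigma> S X h" and hh': "is_hom \<Sigma> S X h'"
      and av: "\<forall>v\<in>(fst m ` hV L \<union> fst c ` hV C) \<inter> hV S. fst h v = fst h' v"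
      and ae: "\<forall>e\<in>(snd m ` hE L \<union> snd c ` hE C) \<inter> hE S. snd h e = snd h' e"
    have x: "is_hom \<Sigma> L X (m ;; h)" by (rule hom_comp[OF h1 hh])
    have y: "is_hom \<Sigma> C X (c ;; h)" by (rule hom_comp[OF h2 hh])
    have "hom_eq K (f ;; (m ;; h)) (g ;; (c ;; h))" using cm unfolding hom_eq_def comp_def by auto
    then obtain h0 where u: "\<forall>h''. is_hom \<Sigma> S X h'' \<and> hom_eq L (m ;; h'') (m ;; h) \<and> hom_eq C (c ;; h'') (c ;; h)
                 \<longrightarrow> hom_eq S h0 h''"
      using po x y unfolding is_pushout_def by blast
    have "hom_eq S h0 h" apply (rule u[rule_format]) using hh unfolding hom_eq_def by auto
    moreover have "hom_eq S h0 h'" apply (rule u[rule_format])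
      using hh' av ae hom_V[OF h1] hom_V[OF h2] hom_E[OF h1] hom_E[OF h2]
      unfolding hom_eq_def comp_def by auto
    ultimately show "hom_eq S h h'" unfolding hom_eq_def by auto
  qed
qed

lemma pushout_disj:
  assumes po: "is_pushout \<Sigma> K L C S f g m c" and K: "hE K = {}"
    and a: "a \<in> hE L" and b: "b \<in> hE C"
  shows "snd m a \<noteq> snd c b"
proof -
  have hA: "hypergraph \<Sigma> L" and hB: "hypergraph \<Sigma> C" using po unfolding is_pushout_def is_hom_def by auto
  let ?E = "(\<lambda>e. 2*e) ` hE L \<union> (\<lambda>e. 2*e+1) ` hE C"
  let ?f = "\<lambda>n. if even n then triple L (n div 2) else triple C (n div 2)"
  have fin: "finite ?E" using hA hB unfolding hypergraph_def by auto
  have fS: "?f ` ?E \<subseteq> \<Sigma>" using triple_in[OF hA] triple_in[OF hB] by auto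
  have x: "is_hom \<Sigma> L (bq ?E ?f) (\<lambda>_. 0, \<lambda>e. 2*e)"
    by (rule bq_hom[OF hA fin fS]) (auto simp: triple_def)
  have y: "is_hom \<Sigma> C (bq ?E ?f) (\<lambda>_. 0, \<lambda>e. 2*e+1)"
    by (rule bq_hom[OF hB fin fS]) (auto simp: triple_def)
  have "hom_eq K (f ;; (\<lambda>_. 0, \<lambda>e. 2*e)) (g ;; (\<lambda>_. 0, \<lambda>e. 2*e+1))"
    using K unfolding hom_eq_def comp_def by auto
  then obtain h where "hom_eq L (m ;; h) (\<lambda>_. 0, \<lambda>e. 2*e)" "hom_eq C (c ;; h) (\<lambda>_. 0, \<lambda>e. 2*e+1)"
    using po x y unfolding is_pushout_def by blast
  then have "snd h (snd m a) = 2*a" "snd h (snd c b) = 2*b+1" using a b unfolding hom_eq_def comp_def by auto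
  then show ?thesis by (metis even_Suc even_mult_iff even_numeral Suc_eq_plus1)
qed

lemma pushout_inj:
  assumes po: "is_pushout \<Sigma> K L C S f g m c" and K: "hE K = {}"
    and fi: "inj_on (fst f) (hV K)"
  shows "inj_on (fst c) (hV C) \<and> inj_on (snd c) (hE C)"
proof -
  have hf: "is_hom \<Sigma> K L f" and hg: "is_hom \<Sigma> K C g" using po unfolding is_pushout_def by auto
  have hL: "hypergraph \<Sigma> L" and hC: "hypergraph \<Sigma> C" using po unfolding is_pushout_def is_hom_def by auto
  define xn where "xn u = (if u \<in> fst f ` hV K then 2 * fst g (inv_into (hV K) (fst f) u) else 2*u+1)" for u
  define X :: "'a hg" where "X = \<lparr>hV = (\<lambda>v. 2*v) ` hV C \<union> (\<lambda>v. 2*v+1) ` (hV L - fst f ` hV K),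
    hE = (\<lambda>e. 2*e) ` hE C \<union> (\<lambda>e. 2*e+1) ` hE L,
    hs = (\<lambda>n. if even n then map (\<lambda>v. 2*v) (hs C (n div 2)) else map xn (hs L (n div 2))),
    ht = (\<lambda>n. if even n then map (\<lambda>v. 2*v) (ht C (n div 2)) else map xn (ht L (n div 2))),
    hl = (\<lambda>n. if even n then hl C (n div 2) else hl L (n div 2))\<rparr>"
  have xnV: "xn u \<in> hV X" if "u \<in> hV L" for u
  proof (cases "u \<in> fst f ` hV K")
    case True
    then have "inv_into (hV K) (fst f) u \<in> hV K" by (rule inv_into_into)
    then have "fst g (inv_into (hV K) (fst f) u) \<in> hV C" by (rule hom_V[OF hg])
    then show ?thesis using True unfolding xn_def X_def by auto
  next
    case False then show ?thesis using that unfolding xn_def X_def by auto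
  qed
  have hX: "hypergraph \<Sigma> X"
  proof -
    have "finite (hV X)" "finite (hE X)" using hL hC unfolding X_def hypergraph_def by auto
    moreover have "set (hs X n) \<subseteq> hV X \<and> set (ht X n) \<subseteq> hV X \<and> (hl X n, length (hs X n), length (ht X n)) \<in> \<Sigma>"
      if "n \<in> hE X" for n
    proof -
      from that consider e where "e \<in> hE C" "n = 2*e" | e where "e \<in> hE L" "n = 2*e+1"
        unfolding X_def by auto
      then show ?thesis
      proof cases
        case 1
        then show ?thesis using hg_s[OF hC 1(1)] hg_t[OF hC 1(1)] triple_in[OF hC 1(1)]
          unfolding triple_def by (auto simp: X_def)
      next
        case 2
        have "set (hs X n) = xn ` set (hs L e)" "set (ht X n) = xn ` set (ht L e)"
          "hl X n = hl L e" "length (hs X n) = length (hs L e)" "length (ht X n) = length (ht L e)"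
          using 2 by (auto simp: X_def)
        then show ?thesis using hg_s[OF hL 2(1)] hg_t[OF hL 2(1)] triple_in[OF hL 2(1)] xnV
          unfolding triple_def by auto
      qed
    qed
    ultimately show ?thesis unfolding hypergraph_def by blast
  qed
  have x: "is_hom \<Sigma> L X (xn, \<lambda>e. 2*e+1)" using hL hX xnV unfolding is_hom_def
    by (auto simp: X_def)
  have y: "is_hom \<Sigma> C X (\<lambda>v. 2*v, \<lambda>e. 2*e)" using hC hX unfolding is_hom_def
    by (auto simp: X_def)
  have "hom_eq K (f ;; (xn, \<lambda>e. 2*e+1)) (g ;; (\<lambda>v. 2*v, \<lambda>e. 2*e))"
    using K fi unfolding hom_eq_def comp_def xn_def by auto
  then obtain h where "hom_eq C (c ;; h) (\<lambda>v. 2*v, \<lambda>e. 2*e)"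
    using po x y unfolding is_pushout_def by blast
  then have "\<forall>v\<in>hV C. fst h (fst c v) = 2*v" "\<forall>e\<in>hE C. snd h (snd c e) = 2*e"
    unfolding hom_eq_def comp_def by auto
  then show ?thesis unfolding inj_on_def by (metis mult_left_cancel zero_neq_numeral)
qed


lemma fin_in: "hypergraph \<Sigma> G \<Longrightarrow> finite {(e, i). e \<in> hE G \<and> i < length (ht G e) \<and> ht G e ! i = v}"
  by (rule finite_subset[of _ "Sigma (hE G) (\<lambda>e. {..<length (ht G e)})"])
     (auto simp: hypergraph_def)
lemma fin_out: "hypergraph \<Sigma> G \<Longrightarrow> finite {(e, i). e \<in> hE G \<and> i < length (hs G e) \<and> hs G e ! i = v}"
  by (rule finite_subset[of _ "Sigma (hE G) (\<lambda>e. {..<length (hs G e)})"])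
     (auto simp: hypergraph_def)

lemma in_deg_pos: "hypergraph \<Sigma> G \<Longrightarrow> e \<in> hE G \<Longrightarrow> i < length (ht G e) \<Longrightarrow> ht G e ! i = v
   \<Longrightarrow> in_degree G v \<noteq> 0"
  unfolding in_degree_def using fin_in[of \<Sigma> G v] by (subst card_0_eq) auto
lemma out_deg_pos: "hypergraph \<Sigma> G \<Longrightarrow> e \<in> hE G \<Longrightarrow> i < length (hs G e) \<Longrightarrow> hs G e ! i = v
   \<Longrightarrow> out_degree G v \<noteq> 0"
  unfolding out_degree_def using fin_out[of \<Sigma> G v] by (subst card_0_eq) auto
lemma in_deg_wit: "in_degree G v \<noteq> 0 \<Longrightarrow> \<exists>e i. e \<in> hE G \<and> i < length (ht G e) \<and> ht G e ! i = v"
proof -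
  assume "in_degree G v \<noteq> 0"
  then have "{(e, i). e \<in> hE G \<and> i < length (ht G e) \<and> ht G e ! i = v} \<noteq> {}"
    unfolding in_degree_def by (metis card.empty)
  then show ?thesis by blast
qed
lemma out_deg_wit: "out_degree G v \<noteq> 0 \<Longrightarrow> \<exists>e i. e \<in> hE G \<and> i < length (hs G e) \<and> hs G e ! i = v"
proof -
  assume "out_degree G v \<noteq> 0"
  then have "{(e, i). e \<in> hE G \<and> i < length (hs G e) \<and> hs G e ! i = v} \<noteq> {}"
    unfolding out_degree_def by (metis card.empty)
  then show ?thesis by blast
qed

lemma in_deg_two: "hypergraph \<Sigma> G \<Longrightarrow> e \<in> hE G \<Longrightarrow> i < length (ht G e) \<Longrightarrow> ht G e ! i = v
   \<Longrightarrow> e' \<in> hE G \<Longrightarrow> j < length (ht G e') \<Longrightarrow> ht G e' ! j = v \<Longrightarrow> e \<noteq> e'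
   \<Longrightarrow> 2 \<le> in_degree G v"
  unfolding in_degree_def
  using card_mono[OF fin_in[of \<Sigma> G v], of "{(e,i),(e',j)}"] by auto
lemma out_deg_two: "hypergraph \<Sigma> G \<Longrightarrow> e \<in> hE G \<Longrightarrow> i < length (hs G e) \<Longrightarrow> hs G e ! i = v
   \<Longrightarrow> e' \<in> hE G \<Longrightarrow> j < length (hs G e') \<Longrightarrow> hs G e' ! j = v \<Longrightarrow> e \<noteq> e'
   \<Longrightarrow> 2 \<le> out_degree G v"
  unfolding out_degree_def
  using card_mono[OF fin_out[of \<Sigma> G v], of "{(e,i),(e',j)}"] by auto

lemma no_isolated:
  assumes hg: "hypergraph \<Sigma> L" and sc: "strongly_connected L" and v: "v \<in> hV L"
  shows "in_degree L v \<noteq> 0 \<or> out_degree L v \<noteq> 0"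
proof (rule ccontr)
  assume "\<not> ?thesis"
  then have "v \<in> in_nodes L" "v \<in> out_nodes L" "out_degree L v = 0" using v unfolding in_nodes_def out_nodes_def by auto
  then obtain p where p: "path_from_to L p v v" using sc unfolding strongly_connected_def by blast
  then have "hd p \<in> hE L" "v \<in> set (hs L (hd p))" unfolding path_from_to_def is_path_def by auto
  then obtain i where "i < length (hs L (hd p))" "hs L (hd p) ! i = v" by (meson in_set_conv_nth)
  with out_deg_pos[OF hg \<open>hd p \<in> hE L\<close>] \<open>out_degree L v = 0\<close> show False by blast
qed

lemma rule_K_discrete: "left_connected_rule \<Sigma> \<rho> \<Longrightarrow> hE (rK \<rho>) = {}"
  unfolding left_connected_rule_def using coprod_discrete by blast

lemma rule_K_nodes:
  assumes r: "left_connected_rule \<Sigma> \<rho>"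
  shows "fst (rkL \<rho>) ` hV (rK \<rho>) = in_nodes (rL \<rho>) \<union> out_nodes (rL \<rho>)"
proof -
  have cp: "is_coproduct \<Sigma> (rI \<rho>) (rO \<rho>) (rK \<rho>) (rjI \<rho>) (rjO \<rho>)" using r unfolding left_connected_rule_def by blast
  have hI: "is_hom \<Sigma> (rI \<rho>) (rK \<rho>) (rjI \<rho>)" and hO: "is_hom \<Sigma> (rO \<rho>) (rK \<rho>) (rjO \<rho>)"
    using cp unfolding is_coproduct_def by auto
  have "hV (rK \<rho>) = fst (rjI \<rho>) ` hV (rI \<rho>) \<union> fst (rjO \<rho>) ` hV (rO \<rho>)"
    using coprod_surj[OF cp] hom_V[OF hI] hom_V[OF hO] by blast
  moreover have "fst (rjI \<rho> ;; rkL \<rho>) ` hV (rI \<rho>) = in_nodes (rL \<rho>)"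
    "fst (rjO \<rho> ;; rkL \<rho>) ` hV (rO \<rho>) = out_nodes (rL \<rho>)"
    using r unfolding left_connected_rule_def ma_cospan_def by auto
  ultimately show ?thesis unfolding comp_def by (simp add: image_Un image_image)
qed



lemma half:
  assumes hL: "hypergraph \<Sigma> L" and sc: "strongly_connected L"
    and m: "is_mono \<Sigma> L S m" and m': "is_mono \<Sigma> (rL \<rho>) S m'"
    and ma: "is_ma S"
    and r: "left_connected_rule \<Sigma> \<rho>"
    and po: "is_pushout \<Sigma> (rK \<rho>) (rL \<rho>) C S (rkL \<rho>) k m' c"
    and nog: "\<forall>e\<in>hE L. \<forall>e'\<in>hE (rL \<rho>). snd m e \<noteq> snd m' e'"
  shows "\<exists>h. is_hom \<Sigma> L C h \<and> hom_eq L (h ;; c) m"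
proof -
  have K: "hE (rK \<rho>) = {}" by (rule rule_K_discrete[OF r])
  have fi: "inj_on (fst (rkL \<rho>)) (hV (rK \<rho>))" using r unfolding left_connected_rule_def is_mono_def by blast
  have inj: "inj_on (fst c) (hV C)" "inj_on (snd c) (hE C)" using pushout_inj[OF po K fi] by auto
  have surj: "hE S \<subseteq> snd m' ` hE (rL \<rho>) \<union> snd c ` hE C" "hV S \<subseteq> fst m' ` hV (rL \<rho>) \<union> fst c ` hV C"
    using pushout_surj[OF po] by auto
  have hc: "is_hom \<Sigma> C S c" and hk: "is_hom \<Sigma> (rK \<rho>) C k" and comm: "hom_eq (rK \<rho>) (rkL \<rho> ;; m') (k ;; c)"
    using po unfolding is_pushout_def by auto
  have hm: "is_hom \<Sigma> L S m" using m unfolding is_mono_def by blast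
  have hm': "is_hom \<Sigma> (rL \<rho>) S m'" using m' unfolding is_mono_def by blast
  have hS: "hypergraph \<Sigma> S" by (rule hom_hg2[OF hm])
  have hL': "hypergraph \<Sigma> (rL \<rho>)" by (rule hom_hg1[OF hm'])
  have hC: "hypergraph \<Sigma> C" by (rule hom_hg1[OF hc])
  have eim: "snd m e \<in> snd c ` hE C" if e: "e \<in> hE L" for e
  proof -
    have "snd m e \<in> hE S" by (rule hom_E[OF hm e])
    then show ?thesis using surj(1) nog e by blast
  qed
  have vim: "fst m v \<in> fst c ` hV C" if v: "v \<in> hV L" for v
  proof (rule ccontr)
    assume nw: "fst m v \<notin> fst c ` hV C"
    have wS: "fst m v \<in> hV S" by (rule hom_V[OF hm v])
    then obtain u where u: "u \<in> hV (rL \<rho>)" "fst m v = fst m' u" using surj(2) nw by blast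
    have "u \<notin> fst (rkL \<rho>) ` hV (rK \<rho>)"
    proof
      assume "u \<in> fst (rkL \<rho>) ` hV (rK \<rho>)"
      then obtain k0 where k0: "k0 \<in> hV (rK \<rho>)" "u = fst (rkL \<rho>) k0" by blast
      then have "fst m' u = fst c (fst k k0)" using comm unfolding hom_eq_def comp_def by auto
      moreover have "fst k k0 \<in> hV C" by (rule hom_V[OF hk k0(1)])
      ultimately show False using nw u by auto
    qed
    then have "u \<notin> in_nodes (rL \<rho>)" "u \<notin> out_nodes (rL \<rho>)" using rule_K_nodes[OF r] by auto
    then have "in_degree (rL \<rho>) u \<noteq> 0" "out_degree (rL \<rho>) u \<noteq> 0" using u(1)
      unfolding in_nodes_def out_nodes_def by auto
    then obtain e2 j e3 j' where w2: "e2 \<in> hE (rL \<rho>)" "j < length (ht (rL \<rho>) e2)" "ht (rL \<rho>) e2 ! j = u"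
      and w3: "e3 \<in> hE (rL \<rho>)" "j' < length (hs (rL \<rho>) e3)" "hs (rL \<rho>) e3 ! j' = u"
      using in_deg_wit out_deg_wit by metis
    have deg: "in_degree S (fst m v) \<le> 1" "out_degree S (fst m v) \<le> 1" using ma wS unfolding is_ma_def by auto
    from no_isolated[OF hL sc v] show False
    proof
      assume "in_degree L v \<noteq> 0"
      then obtain e1 i where w1: "e1 \<in> hE L" "i < length (ht L e1)" "ht L e1 ! i = v" using in_deg_wit by metis
      have "2 \<le> in_degree S (fst m v)"
      proof (rule in_deg_two[OF hS])
        show "snd m e1 \<in> hE S" by (rule hom_E[OF hm w1(1)])
        show "snd m' e2 \<in> hE S" by (rule hom_E[OF hm' w2(1)])
        show "i < length (ht S (snd m e1))" using hom_t[OF hm w1(1)] w1 by simp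
        show "ht S (snd m e1) ! i = fst m v" using hom_t[OF hm w1(1)] w1 by simp
        show "j < length (ht S (snd m' e2))" using hom_t[OF hm' w2(1)] w2 by simp
        show "ht S (snd m' e2) ! j = fst m v" using hom_t[OF hm' w2(1)] w2 u by simp
        show "snd m e1 \<noteq> snd m' e2" using nog w1 w2 by blast
      qed
      then show False using deg by simp
    next
      assume "out_degree L v \<noteq> 0"
      then obtain e1 i where w1: "e1 \<in> hE L" "i < length (hs L e1)" "hs L e1 ! i = v" using out_deg_wit by metis
      have "2 \<le> out_degree S (fst m v)"
      proof (rule out_deg_two[OF hS])
        show "snd m e1 \<in> hE S" by (rule hom_E[OF hm w1(1)])
        show "snd m' e3 \<in> hE S" by (rule hom_E[OF hm' w3(1)])
        show "i < length (hs S (snd m e1))" using hom_s[OF hm w1(1)] w1 by simp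
        show "hs S (snd m e1) ! i = fst m v" using hom_s[OF hm w1(1)] w1 by simp
        show "j' < length (hs S (snd m' e3))" using hom_s[OF hm' w3(1)] w3 by simp
        show "hs S (snd m' e3) ! j' = fst m v" using hom_s[OF hm' w3(1)] w3 u by simp
        show "snd m e1 \<noteq> snd m' e3" using nog w1 w3 by blast
      qed
      then show False using deg by simp
    qed
  qed
  define h where "h = (\<lambda>v. inv_into (hV C) (fst c) (fst m v), \<lambda>e. inv_into (hE C) (snd c) (snd m e))"
  have hV': "fst h v \<in> hV C" "fst c (fst h v) = fst m v" if "v \<in> hV L" for v
    using vim[OF that] unfolding h_def by (auto intro: inv_into_into f_inv_into_f)
  have hE': "snd h e \<in> hE C" "snd c (snd h e) = snd m e" if "e \<in> hE L" for e
    using eim[OF that] unfolding h_def by (auto intro: inv_into_into f_inv_into_f)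
  have mapc: "map (fst c) (map (fst h) xs) = map (fst m) xs" "set (map (fst h) xs) \<subseteq> hV C"
    if "set xs \<subseteq> hV L" for xs
    using that hV' by (induction xs) auto
  have "is_hom \<Sigma> L C h"
    unfolding is_hom_def
  proof (intro conjI ballI)
    show "hypergraph \<Sigma> L" "hypergraph \<Sigma> C" by fact+
    show "fst h ` hV L \<subseteq> hV C" using hV' by auto
    show "snd h ` hE L \<subseteq> hE C" using hE' by auto
    fix e assume e: "e \<in> hE L"
    have sl: "set (hs L e) \<subseteq> hV L" "set (ht L e) \<subseteq> hV L" using hg_s[OF hL e] hg_t[OF hL e] by auto
    have "map (fst c) (hs C (snd h e)) = hs S (snd c (snd h e))" using hom_s[OF hc hE'(1)[OF e]] by simp
    also have "\<dots> = map (fst m) (hs L e)" using hE'(2)[OF e] hom_s[OF hm e] by simp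
    also have "\<dots> = map (fst c) (map (fst h) (hs L e))" using mapc(1)[OF sl(1)] by simp
    finally show "hs C (snd h e) = map (fst h) (hs L e)"
      using map_inj_on[OF _ inj_on_subset[OF inj(1)]] hg_s[OF hC hE'(1)[OF e]] mapc(2)[OF sl(1)] by blast
    have "map (fst c) (ht C (snd h e)) = ht S (snd c (snd h e))" using hom_t[OF hc hE'(1)[OF e]] by simp
    also have "\<dots> = map (fst m) (ht L e)" using hE'(2)[OF e] hom_t[OF hm e] by simp
    also have "\<dots> = map (fst c) (map (fst h) (ht L e))" using mapc(1)[OF sl(2)] by simp
    finally show "ht C (snd h e) = map (fst h) (ht L e)"
      using map_inj_on[OF _ inj_on_subset[OF inj(1)]] hg_t[OF hC hE'(1)[OF e]] mapc(2)[OF sl(2)] by blast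
    have "hl C (snd h e) = hl S (snd c (snd h e))" using hom_l[OF hc hE'(1)[OF e]] by simp
    also have "\<dots> = hl L e" using hE'(2)[OF e] hom_l[OF hm e] by simp
    finally show "hl C (snd h e) = hl L e" .
  qed
  moreover have "hom_eq L (h ;; c) m" unfolding hom_eq_def comp_def using hV'(2) hE'(2) by auto
  ultimately show ?thesis by blast
qed



lemma Q:
  assumes coprod: "is_coproduct \<Sigma> L1 L2 P \<iota>1 \<iota>2"
    and coeq: "is_coequaliser \<Sigma> G P g1 g2 S \<epsilon>"
    and mono1: "is_mono \<Sigma> L1 S (\<iota>1 ;; \<epsilon>)"
    and mono2: "is_mono \<Sigma> L2 S (\<iota>2 ;; \<epsilon>)"
    and nog: "\<not> (\<exists>e1\<in>hE L1. \<exists>e2\<in>hE L2.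
            glued_edge G g1 g2 (snd \<iota>1 e1) (snd \<iota>2 e2) \<or>
            glued_edge G g1 g2 (snd \<iota>2 e2) (snd \<iota>1 e1))"
  shows "\<forall>e1\<in>hE L1. \<forall>e2\<in>hE L2. snd (\<iota>1 ;; \<epsilon>) e1 \<noteq> snd (\<iota>2 ;; \<epsilon>) e2"
proof -
  have hg1: "is_hom \<Sigma> G P g1" and hg2: "is_hom \<Sigma> G P g2" and he: "is_hom \<Sigma> P S \<epsilon>"
    and ceq: "hom_eq G (g1 ;; \<epsilon>) (g2 ;; \<epsilon>)" using coeq unfolding is_coequaliser_def by auto
  have i1: "inj_on (snd (\<iota>1 ;; \<epsilon>)) (hE L1)" using mono1 unfolding is_mono_def by blast
  have i2: "inj_on (snd (\<iota>2 ;; \<epsilon>)) (hE L2)" using mono2 unfolding is_mono_def by blast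
  have EP: "hE P \<subseteq> snd \<iota>1 ` hE L1 \<union> snd \<iota>2 ` hE L2" using coprod_surj[OF coprod] by blast
  have same: "snd g1 y = snd g2 y" if y: "y \<in> hE G" for y
  proof -
    have a: "snd g1 y \<in> hE P" by (rule hom_E[OF hg1 y])
    have b: "snd g2 y \<in> hE P" by (rule hom_E[OF hg2 y])
    have eq: "snd \<epsilon> (snd g1 y) = snd \<epsilon> (snd g2 y)" using ceq y unfolding hom_eq_def comp_def by auto
    have A: "snd g1 y \<in> snd \<iota>1 ` hE L1 \<union> snd \<iota>2 ` hE L2" using a EP by blast
    have B: "snd g2 y \<in> snd \<iota>1 ` hE L1 \<union> snd \<iota>2 ` hE L2" using b EP by blast
    consider
        a' b' where "a' \<in> hE L1" "b' \<in> hE L1" "snd g1 y = snd \<iota>1 a'" "snd g2 y = snd \<iota>1 b'"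
      | a' b' where "a' \<in> hE L1" "b' \<in> hE L2" "snd g1 y = snd \<iota>1 a'" "snd g2 y = snd \<iota>2 b'"
      | a' b' where "a' \<in> hE L2" "b' \<in> hE L1" "snd g1 y = snd \<iota>2 a'" "snd g2 y = snd \<iota>1 b'"
      | a' b' where "a' \<in> hE L2" "b' \<in> hE L2" "snd g1 y = snd \<iota>2 a'" "snd g2 y = snd \<iota>2 b'"
      using A B by (elim UnE imageE) blast+
    then show ?thesis
    proof cases
      case 1
      then have "snd (\<iota>1 ;; \<epsilon>) a' = snd (\<iota>1 ;; \<epsilon>) b'" using eq by (simp add: comp_def)
      then have "a' = b'" using i1 1 by (meson inj_onD)
      then show ?thesis using 1 by simp
    next
      case 2
      then have "glued_edge G g1 g2 (snd \<iota>1 a') (snd \<iota>2 b')" using y unfolding glued_edge_def by blast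
      then show ?thesis using nog 2 by blast
    next
      case 3
      then have "glued_edge G g1 g2 (snd \<iota>2 a') (snd \<iota>1 b')" using y unfolding glued_edge_def by blast
      then show ?thesis using nog 3 by blast
    next
      case 4
      then have "snd (\<iota>2 ;; \<epsilon>) a' = snd (\<iota>2 ;; \<epsilon>) b'" using eq by (simp add: comp_def)
      then have "a' = b'" using i2 4 by (meson inj_onD)
      then show ?thesis using 4 by simp
    qed
  qed
  have hP: "hypergraph \<Sigma> P" by (rule hom_hg1[OF he])
  have fin: "finite (hE P)" using hP unfolding hypergraph_def by blast
  have fS: "triple P ` hE P \<subseteq> \<Sigma>" using triple_in[OF hP] by auto
  have x: "is_hom \<Sigma> P (bq (hE P) (triple P)) (\<lambda>_. 0, id)"
    by (rule bq_hom[OF hP fin fS]) (auto simp: triple_def)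
  have "hom_eq G (g1 ;; (\<lambda>_. 0, id)) (g2 ;; (\<lambda>_. 0, id))"
    using same unfolding hom_eq_def comp_def by auto
  then obtain h where h: "hom_eq P (\<epsilon> ;; h) (\<lambda>_. 0, id)"
    using coeq x unfolding is_coequaliser_def by blast
  show ?thesis
  proof (intro ballI notI)
    fix e1 e2 assume e1: "e1 \<in> hE L1" and e2: "e2 \<in> hE L2"
      and eq: "snd (\<iota>1 ;; \<epsilon>) e1 = snd (\<iota>2 ;; \<epsilon>) e2"
    have h1: "is_hom \<Sigma> L1 P \<iota>1" and h2: "is_hom \<Sigma> L2 P \<iota>2" using coprod unfolding is_coproduct_def by auto
    have "snd \<iota>1 e1 \<in> hE P" "snd \<iota>2 e2 \<in> hE P" using hom_E[OF h1 e1] hom_E[OF h2 e2] by auto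
    then have "snd \<iota>1 e1 = snd \<iota>2 e2" using h eq unfolding hom_eq_def comp_def by (metis id_apply o_apply snd_conv)
    then show False using coprod_disj[OF coprod e1 e2] by simp
  qed
qed

theorem mainTheorem5:
  fixes \<Sigma> :: "'x signature" and \<R> :: "'x rule set" and \<rho>1 \<rho>2 :: "'x rule"
    and P G S H1 H2 C1 C2 :: "'x hg"
    and \<iota>1 \<iota>2 g1 g2 \<epsilon> a1 b1 a2 b2 c1 c2 :: hom
  assumes sys: "left_connected_system \<Sigma> \<R>"
    and rules: "\<rho>1 \<in> \<R>" "\<rho>2 \<in> \<R>"
    and coprod: "is_coproduct \<Sigma> (rL \<rho>1) (rL \<rho>2) P \<iota>1 \<iota>2"
    and coeq: "is_coequaliser \<Sigma> G P g1 g2 S \<epsilon>"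
    and mono1: "is_mono \<Sigma> (rL \<rho>1) S (\<iota>1 ;; \<epsilon>)"
    and mono2: "is_mono \<Sigma> (rL \<rho>2) S (\<iota>2 ;; \<epsilon>)"
    and macosp: "ma_cospan \<Sigma> (discrete_on (in_nodes S) S) S (discrete_on (out_nodes S) S) incl incl"
    and der1: "derivation \<Sigma> \<rho>1 (discrete_on (in_nodes S) S) (discrete_on (out_nodes S) S)
                 S incl incl H1 a1 b1 (\<iota>1 ;; \<epsilon>) C1 c1"
    and der2: "derivation \<Sigma> \<rho>2 (discrete_on (in_nodes S) S) (discrete_on (out_nodes S) S)
                 S incl incl H2 a2 b2 (\<iota>2 ;; \<epsilon>) C2 c2"
  shows "\<not> parallel \<Sigma> (rL \<rho>1) (\<iota>1 ;; \<epsilon>) C1 c1 (rL \<rho>2) (\<iota>2 ;; \<epsilon>) C2 c2 \<longleftrightarrow>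
         (\<exists>e1\<in>hE (rL \<rho>1). \<exists>e2\<in>hE (rL \<rho>2).
            glued_edge G g1 g2 (snd \<iota>1 e1) (snd \<iota>2 e2) \<or>
            glued_edge G g1 g2 (snd \<iota>2 e2) (snd \<iota>1 e1))"
proof -
  have r1: "left_connected_rule \<Sigma> \<rho>1" and r2: "left_connected_rule \<Sigma> \<rho>2"
    using sys rules unfolding left_connected_system_def by auto
  obtain k1 where po1: "is_pushout \<Sigma> (rK \<rho>1) (rL \<rho>1) C1 S (rkL \<rho>1) k1 (\<iota>1 ;; \<epsilon>) c1"
    using der1 unfolding derivation_def by blast
  obtain k2 where po2: "is_pushout \<Sigma> (rK \<rho>2) (rL \<rho>2) C2 S (rkL \<rho>2) k2 (\<iota>2 ;; \<epsilon>) c2"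
    using der2 unfolding derivation_def by blast
  have ma: "is_ma S" using macosp unfolding ma_cospan_def by blast
  have hL1: "hypergraph \<Sigma> (rL \<rho>1)" and hL2: "hypergraph \<Sigma> (rL \<rho>2)"
    using mono1 mono2 unfolding is_mono_def is_hom_def by auto
  have sc1: "strongly_connected (rL \<rho>1)" and sc2: "strongly_connected (rL \<rho>2)"
    using r1 r2 unfolding left_connected_rule_def by auto
  have ceq: "hom_eq G (g1 ;; \<epsilon>) (g2 ;; \<epsilon>)" using coeq unfolding is_coequaliser_def by auto
  show ?thesis
  proof
    assume np: "\<not> parallel \<Sigma> (rL \<rho>1) (\<iota>1 ;; \<epsilon>) C1 c1 (rL \<rho>2) (\<iota>2 ;; \<epsilon>) C2 c2"
    show "\<exists>e1\<in>hE (rL \<rho>1). \<exists>e2\<in>hE (rL \<rho>2).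
            glued_edge G g1 g2 (snd \<iota>1 e1) (snd \<iota>2 e2) \<or>
            glued_edge G g1 g2 (snd \<iota>2 e2) (snd \<iota>1 e1)"
    proof (rule ccontr)
      assume ng: "\<not> ?thesis"
      have nog: "\<forall>e1\<in>hE (rL \<rho>1). \<forall>e2\<in>hE (rL \<rho>2). snd (\<iota>1 ;; \<epsilon>) e1 \<noteq> snd (\<iota>2 ;; \<epsilon>) e2"
        by (rule Q[OF coprod coeq mono1 mono2 ng])
      have A: "\<exists>h. is_hom \<Sigma> (rL \<rho>1) C2 h \<and> hom_eq (rL \<rho>1) (h ;; c2) (\<iota>1 ;; \<epsilon>)"
        by (rule half[OF hL1 sc1 mono1 mono2 ma r2 po2 nog])
      have nog': "\<forall>e2\<in>hE (rL \<rho>2). \<forall>e1\<in>hE (rL \<rho>1). snd (\<iota>2 ;; \<epsilon>) e2 \<noteq> snd (\<iota>1 ;; \<epsilon>) e1"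
        using nog by metis
      have B: "\<exists>h. is_hom \<Sigma> (rL \<rho>2) C1 h \<and> hom_eq (rL \<rho>2) (h ;; c1) (\<iota>2 ;; \<epsilon>)"
        by (rule half[OF hL2 sc2 mono2 mono1 ma r1 po1 nog'])
      show False using np A B unfolding parallel_def by blast
    qed
  next
    assume "\<exists>e1\<in>hE (rL \<rho>1). \<exists>e2\<in>hE (rL \<rho>2).
            glued_edge G g1 g2 (snd \<iota>1 e1) (snd \<iota>2 e2) \<or>
            glued_edge G g1 g2 (snd \<iota>2 e2) (snd \<iota>1 e1)"
    then obtain e1 e2 where e1: "e1 \<in> hE (rL \<rho>1)" and e2: "e2 \<in> hE (rL \<rho>2)"
      and eq: "snd (\<iota>1 ;; \<epsilon>) e1 = snd (\<iota>2 ;; \<epsilon>) e2"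
      using ceq unfolding glued_edge_def hom_eq_def comp_def by (auto; metis)
    show "\<not> parallel \<Sigma> (rL \<rho>1) (\<iota>1 ;; \<epsilon>) C1 c1 (rL \<rho>2) (\<iota>2 ;; \<epsilon>) C2 c2"
    proof
      assume "parallel \<Sigma> (rL \<rho>1) (\<iota>1 ;; \<epsilon>) C1 c1 (rL \<rho>2) (\<iota>2 ;; \<epsilon>) C2 c2"
      then obtain h1 where h1: "is_hom \<Sigma> (rL \<rho>1) C2 h1" "hom_eq (rL \<rho>1) (h1 ;; c2) (\<iota>1 ;; \<epsilon>)"
        unfolding parallel_def by blast
      have "snd c2 (snd h1 e1) = snd (\<iota>2 ;; \<epsilon>) e2" using h1(2) e1 eq unfolding hom_eq_def comp_def by auto
      moreover have "snd h1 e1 \<in> hE C2" by (rule hom_E[OF h1(1) e1])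
      ultimately show False
        using pushout_disj[OF po2 rule_K_discrete[OF r2] e2] by metis
    qed
  qed
qed


end
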